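(* Let $T(\mathcal{Y})$ be the standard equilateral triangle with vertices $(0,0),(1,0),(1/2,\sqrt3/2)$, let $r\in[1,\infty]$ and $\epsilon\in[0,\sqrt3/3)$, and let $X_1,\dots,X_n$ be i.i.d. according to the segregation alternative $H^S_\epsilon$. Let $\mu_S(r,\epsilon)=\mathbf{E}^S_\epsilon[\rho_n(r)]=\frac12\mathbf{E}^S_\epsilon[h_{12}]$ and $\nu_S(r,\epsilon)=\mathbf{Cov}^S_\epsilon[h_{12},h_{13}]$. Then for all $(r,\epsilon)$ with $\nu_S(r,\epsilon)>0$, $$\sqrt{n}\,\big(\rho_n(r)-\mu_S(r,\epsilon)\big)\xrightarrow{\mathcal{L}}\mathcal{N}(0,\nu_S(r,\epsilon)).$$ Likewise, under the association alternative $H^A_\epsilon$, with $\mu_A(r,\epsilon)=\mathbf{E}^A_\epsilon[\rho_n(r)]$ and $\nu_A(r,\epsilon)=\mathbf{Cov}^A_\epsilon[h_{12},h_{13}]$, one has $\sqrt{n}(\rho_n(r)-\mu_A(r,\epsilon))\xrightarrow{\mathcal{L}}\mathcal{N}(0,\nu_A(r,\epsilon))$ whenever $\nu_A(r,\epsilon)>0$.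
   Context: $r$-factor proximity map $N^r_{\mathcal{Y}}$: the triangle is split into vertex regions $R(\mathsf{y}_j)$ by segments from its center of mass to the edge midpoints. For $x\in T(\mathcal{Y})\setminus\mathcal{Y}$ let $v(x)$ be the vertex whose region contains $x$, $e(x)$ the opposite edge, $\ell(x)$ the line through $x$ parallel to $e(x)$, $\ell_r(x)$ the parallel line on the same side of $v(x)$ with $d(v(x),\ell_r(x))=r\,d(v(x),\ell(x))$, $T_r(x)$ the triangle similar to and with the same orientation as $T(\mathcal{Y})$ with vertex $v(x)$ and opposite edge on $\ell_r(x)$; $N^r_{\mathcal{Y}}(x)=T_r(x)\cap T(\mathcal{Y})$ for $r<\infty$, $N^\infty_{\mathcal{Y}}(x)=T(\mathcal{Y})$, and $N^r_{\mathcal{Y}}(x)=\{x\}$ for $x\in\mathcal{Y}$. $\rho_n(r)$ is the number of ordered pairs $(i,j)$, $i\ne j$, with $X_j\in N^r_{\mathcal{Y}}(X_i)$, divided by $n(n-1)$; $h_{ij}=\mathbf{I}\{X_j\in N^r_{\mathcal{Y}}(X_i)\}+\mathbf{I}\{X_i\in N^r_{\mathcal{Y}}(X_j)\}$. Alternatives: for a vertex $\mathsf{y}$ let $\ell_{\mathsf{y}}(x)$ be the line through $x$ parallel to the edge opposite $\mathsf{y}$ and $T(\mathsf{y},\epsilon)=\{x\in T(\mathcal{Y}):d(\mathsf{y},\ell_{\mathsf{y}}(x))\le\epsilon\}$. Under $H^S_\epsilon$ the $X_i$ are i.i.d. uniform on $T(\mathcal{Y})\setminus\bigcup_{\mathsf{y}\in\mathcal{Y}}T(\mathsf{y},\epsilon)$;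 under $H^A_\epsilon$ they are i.i.d. uniform on $\bigcup_{\mathsf{y}\in\mathcal{Y}}T(\mathsf{y},\sqrt3/3-\epsilon)$. $\mathbf{E}^S_\epsilon,\mathbf{Cov}^S_\epsilon$ (resp. $\mathbf{E}^A_\epsilon,\mathbf{Cov}^A_\epsilon$) denote expectation and covariance under $H^S_\epsilon$ (resp. $H^A_\epsilon$). *)

theory Defs
  imports "HOL-Probability.Probability"
begin

definition vert :: "nat \<Rightarrow> real \<times> real" where
  "vert j = (if j mod 3 = 0 then (0,0) else if j mod 3 = 1 then (1,0) else (1/2, sqrt 3 / 2))"

definition Yset :: "(real \<times> real) set" where
  "Yset = {vert 0, vert 1, vert 2}"

definition Tri :: "(real \<times> real) set" where
  "Tri = convex hull Yset"

definition centroid :: "real \<times> real" where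
  "centroid = (1/3) *\<^sub>R (vert 0 + vert 1 + vert 2)"

definition vregion :: "nat \<Rightarrow> (real \<times> real) set" where
  "vregion j = convex hull {vert j, midpoint (vert j) (vert (j+1)), centroid,
                            midpoint (vert j) (vert (j+2))}"

text \<open>Index of the vertex whose region contains x (least index on the measure-zero
  boundaries).\<close>
definition vidx :: "real \<times> real \<Rightarrow> nat" where
  "vidx x = (LEAST j. x \<in> vregion j)"

definition pline :: "nat \<Rightarrow> real \<times> real \<Rightarrow> (real \<times> real) set" where
  "pline j x = {x + t *\<^sub>R (vert (j+2) - vert (j+1)) | t. True}"

definition dvl :: "nat \<Rightarrow> real \<times> real \<Rightarrow> real" where
  "dvl j x = infdist (vert j) (pline j x)"

text \<open>T_r(x): triangle similar to and with the same orientation as T(Y), with vertex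
  v(x) and opposite edge on l_r(x), i.e. the image of T(Y) under the homothety centred at
  v(x) with ratio d(v(x), l_r(x)) / d(v(x), e(x)), where d(v(x),l_r(x)) = r d(v(x),l(x)).\<close>
definition Tr :: "real \<Rightarrow> real \<times> real \<Rightarrow> (real \<times> real) set" where
  "Tr r x = (let j = vidx x; v = vert j;
                 lam = r * dvl j x / infdist v (pline j (vert (j+1)))
             in (\<lambda>z. v + lam *\<^sub>R (z - v)) ` Tri)"

definition NY :: "ereal \<Rightarrow> real \<times> real \<Rightarrow> (real \<times> real) set" where
  "NY r x = (if x \<in> Yset then {x}
             else if r = \<infinity> then Tri
             else Tr (real_of_ereal r) x \<inter> Tri)"

definition hker :: "ereal \<Rightarrow> real \<times> real \<Rightarrow> real \<times> real \<Rightarrow> real" where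
  "hker r x y = indicator (NY r x) y + indicator (NY r y) x"

definition rho :: "ereal \<Rightarrow> nat \<Rightarrow> (nat \<Rightarrow> real \<times> real) \<Rightarrow> real" where
  "rho r n xs = (\<Sum>i\<in>{1..n}. \<Sum>j\<in>{1..n} - {i}. indicator (NY r (xs i)) (xs j))
                 / (real n * (real n - 1))"

definition Tdel :: "nat \<Rightarrow> real \<Rightarrow> (real \<times> real) set" where
  "Tdel j e = {x \<in> Tri. dvl j x \<le> e}"

definition HS :: "real \<Rightarrow> (real \<times> real) measure" where
  "HS e = uniform_measure lborel (Tri - (\<Union>j<3. Tdel j e))"

definition HA :: "real \<Rightarrow> (real \<times> real) measure" where
  "HA e = uniform_measure lborel (\<Union>j<3. Tdel j (sqrt 3 / 3 - e))"

definition covar :: "'w measure \<Rightarrow> ('w \<Rightarrow> real) \<Rightarrow> ('w \<Rightarrow> real) \<Rightarrow> real" where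
  "covar M f g = prob_space.expectation M (\<lambda>w. f w * g w)
                 - prob_space.expectation M f * prob_space.expectation M g"

definition iid_seq :: "'w measure \<Rightarrow> (nat \<Rightarrow> 'w \<Rightarrow> real \<times> real) \<Rightarrow> (real \<times> real) measure \<Rightarrow> bool" where
  "iid_seq M X P \<longleftrightarrow> prob_space M \<and> prob_space.indep_vars M (\<lambda>_. borel) X UNIV
     \<and> (\<forall>i. X i \<in> borel_measurable M \<and> distr M borel (X i) = P)"

definition mu :: "'w measure \<Rightarrow> (nat \<Rightarrow> 'w \<Rightarrow> real \<times> real) \<Rightarrow> ereal \<Rightarrow> real" where
  "mu M X r = prob_space.expectation M (\<lambda>w. hker r (X 1 w) (X 2 w)) / 2"

definition nu :: "'w measure \<Rightarrow> (nat \<Rightarrow> 'w \<Rightarrow> real \<times> real) \<Rightarrow> ereal \<Rightarrow> real" where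
  "nu M X r = covar M (\<lambda>w. hker r (X 1 w) (X 2 w)) (\<lambda>w. hker r (X 1 w) (X 3 w))"

end

theory Submission
  imports Defs
begin


lemma cdf_normal_scaled:
  assumes s: "0 < (s::real)"
  shows "cdf (density lborel (normal_density 0 s)) x = cdf std_normal_distribution (x / s)"
proof -
  interpret N: prob_space std_normal_distribution
    by (metis real_distribution.axioms(1) real_dist_normal_dist)
  have d: "distributed std_normal_distribution lborel (\<lambda>x. x) std_normal_density"
    unfolding distributed_def by (auto simp: distr_id2 cong: distr_cong)
  have "distributed std_normal_distribution lborel (\<lambda>x. 0 + s * x) (normal_density (0 + s * 0) (\<bar>s\<bar> * 1))"
    by (rule N.normal_density_affine[OF d]) (use s in auto)
  then have e: "distr std_normal_distribution lborel (\<lambda>x. s * x) = density lborel (normal_density 0 s)"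
    using s by (simp add: distributed_def)
  have "cdf (density lborel (normal_density 0 s)) x = measure (distr std_normal_distribution lborel (\<lambda>x. s * x)) {..x}"
    by (simp add: e cdf_def)
  also have "\<dots> = measure std_normal_distribution ((\<lambda>x. s * x) -` {..x} \<inter> space std_normal_distribution)"
    by (rule measure_distr) auto
  also have "(\<lambda>x. s * x) -` {..x} \<inter> space std_normal_distribution = {..x/s}"
    using s by (auto simp: field_simps)
  finally show ?thesis by (simp add: cdf_def)
qed




lemma isCont_std_normal_cdf: "isCont (cdf std_normal_distribution) t"
proof -
  interpret real_distribution std_normal_distribution by (rule real_dist_normal_dist)
  have "emeasure std_normal_distribution {t} = 0"
    by (subst emeasure_density) (auto intro!: nn_integral_zero' eventually_mono[OF AE_lborel_singleton[of t]])
  then show ?thesis using isCont_cdf by (simp add: measure_def)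
qed

lemma cdf_distr_eq:
  assumes "f \<in> borel_measurable M"
  shows "cdf (distr M borel f) t = measure M {w\<in>space M. f w \<le> t}"
proof -
  have "cdf (distr M borel f) t = measure M (f -` {..t} \<inter> space M)"
    unfolding cdf_def by (rule measure_distr) (use assms in auto)
  also have "f -` {..t} \<inter> space M = {w\<in>space M. f w \<le> t}" by auto
  finally show ?thesis .
qed

lemma slutsky:
  fixes W R Z :: "nat \<Rightarrow> 'w \<Rightarrow> real"
  assumes P: "prob_space M" and s: "0 < s"
   and Wm[measurable]: "\<And>n. W n \<in> borel_measurable M" and Rm[measurable]: "\<And>n. R n \<in> borel_measurable M"
   and Zm[measurable]: "\<And>n. Z n \<in> borel_measurable M"
   and Wc: "weak_conv_m (\<lambda>n. distr M borel (W n)) std_normal_distribution"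
   and Rc: "\<And>d. d > 0 \<Longrightarrow> (\<lambda>n. measure M {w\<in>space M. d \<le> \<bar>R n w\<bar>}) \<longlonglongrightarrow> 0"
   and Z: "\<And>n w. n \<ge> 2 \<Longrightarrow> w \<in> space M \<Longrightarrow> Z n w = s * W n w + R n w"
  shows "weak_conv_m (\<lambda>n. distr M borel (Z n)) (density lborel (normal_density 0 s))"
  unfolding weak_conv_m_def weak_conv_def
proof (intro allI impI)
  interpret prob_space M by (rule P)
  fix x :: real
  define \<Phi> where "\<Phi> = cdf std_normal_distribution"
  define FW where "FW n t = prob {w\<in>space M. W n w \<le> t}" for n t
  define FZ where "FZ n = prob {w\<in>space M. Z n w \<le> x}" for n
  define p where "p n d = prob {w\<in>space M. d \<le> \<bar>R n w\<bar>}" for n d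
  have FWc: "(\<lambda>n. FW n t) \<longlonglongrightarrow> \<Phi> t" for t
    using Wc isCont_std_normal_cdf unfolding weak_conv_m_def weak_conv_def \<Phi>_def FW_def
    by (simp add: cdf_distr_eq)
  have U: "FZ n \<le> FW n ((x+d)/s) + p n d" if "n \<ge> 2" "d > 0" for n d
  proof -
    have "FZ n \<le> prob ({w\<in>space M. W n w \<le> (x+d)/s} \<union> {w\<in>space M. d \<le> \<bar>R n w\<bar>})"
      unfolding FZ_def
    proof (rule finite_measure_mono)
      show "{w \<in> space M. Z n w \<le> x} \<subseteq> {w \<in> space M. W n w \<le> (x + d) / s} \<union> {w \<in> space M. d \<le> \<bar>R n w\<bar>}"
      proof safe
        fix w assume w: "w \<in> space M" "Z n w \<le> x" "\<not> d \<le> \<bar>R n w\<bar>"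
        then have "s * W n w \<le> x + d" using Z[OF that(1) w(1)] by auto
        then show "W n w \<le> (x + d) / s" using s by (simp add: field_simps)
      qed
    qed measurable
    also have "\<dots> \<le> FW n ((x+d)/s) + p n d"
      unfolding FW_def p_def by (rule measure_Un_le) measurable
    finally show ?thesis .
  qed
  have L: "FW n ((x-d)/s) \<le> FZ n + p n d" if "n \<ge> 2" "d > 0" for n d
  proof -
    have "FW n ((x-d)/s) \<le> prob ({w\<in>space M. Z n w \<le> x} \<union> {w\<in>space M. d \<le> \<bar>R n w\<bar>})"
      unfolding FW_def
    proof (rule finite_measure_mono)
      show "{w \<in> space M. W n w \<le> (x-d)/s} \<subseteq> {w \<in> space M. Z n w \<le> x} \<union> {w \<in> space M. d \<le> \<bar>R n w\<bar>}"
      proof safe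
        fix w assume w: "w \<in> space M" "W n w \<le> (x-d)/s" "\<not> d \<le> \<bar>R n w\<bar>"
        then have "s * W n w \<le> x - d" using s by (simp add: field_simps)
        then show "Z n w \<le> x" using Z[OF that(1) w(1)] w by auto
      qed
    qed measurable
    also have "\<dots> \<le> FZ n + p n d"
      unfolding FZ_def p_def by (rule measure_Un_le) measurable
    finally show ?thesis .
  qed
  have "(\<lambda>n. FZ n) \<longlonglongrightarrow> \<Phi> (x/s)"
  proof (rule tendstoI)
    fix e :: real assume e: "e > 0"
    obtain \<delta> where \<delta>: "\<delta> > 0" "\<And>t. dist t (x/s) < \<delta> \<Longrightarrow> dist (\<Phi> t) (\<Phi> (x/s)) < e/3"
      using isCont_std_normal_cdf[of "x/s"] e unfolding \<Phi>_def isCont_def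
    proof -
      have "isCont \<Phi> (x/s)" unfolding \<Phi>_def by (rule isCont_std_normal_cdf)
      then obtain \<delta> where d1: "\<delta> > 0" and d2: "\<And>t. t \<noteq> x/s \<and> norm (t - x/s) < \<delta> \<Longrightarrow> norm (\<Phi> t - \<Phi> (x/s)) < e/3"
        using e unfolding isCont_def LIM_eq by (meson divide_pos_pos zero_less_numeral)
      show ?thesis
      proof (rule that[OF d1])
        fix t assume "dist t (x/s) < \<delta>"
        then show "dist (\<Phi> t) (\<Phi> (x/s)) < e/3"
          using d2[of t] e by (cases "t = x/s") (auto simp: dist_real_def)
      qed
    qed
    define d where "d = \<delta> * s / 2"
    have d: "d > 0" using \<delta> s by (simp add: d_def)
    have c1: "\<bar>\<Phi> ((x+d)/s) - \<Phi> (x/s)\<bar> < e/3" "\<bar>\<Phi> ((x-d)/s) - \<Phi> (x/s)\<bar> < e/3"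
      using \<delta>(2)[of "(x+d)/s"] \<delta>(2)[of "(x-d)/s"] s \<delta>(1)
      by (auto simp: dist_real_def d_def field_simps)
    have ev1: "eventually (\<lambda>n. \<bar>FW n ((x+d)/s) - \<Phi> ((x+d)/s)\<bar> < e/3) sequentially"
      using tendstoD[OF FWc, of "e/3"] e by (simp add: dist_real_def)
    have ev2: "eventually (\<lambda>n. \<bar>FW n ((x-d)/s) - \<Phi> ((x-d)/s)\<bar> < e/3) sequentially"
      using tendstoD[OF FWc, of "e/3"] e by (simp add: dist_real_def)
    have ev3: "eventually (\<lambda>n. \<bar>p n d\<bar> < e/3) sequentially"
      using tendstoD[OF Rc[OF d], of "e/3"] e by (simp add: dist_real_def p_def)
    have ev4: "eventually (\<lambda>n. n \<ge> 2) sequentially" by (rule eventually_ge_at_top)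
    show "eventually (\<lambda>n. dist (FZ n) (\<Phi> (x/s)) < e) sequentially"
      using ev1 ev2 ev3 ev4
    proof eventually_elim
      case (elim n)
      show ?case using U[OF elim(4) d] L[OF elim(4) d] elim c1
        unfolding dist_real_def abs_less_iff by linarith
    qed
  qed
  then show "(\<lambda>n. cdf (distr M borel (Z n)) x) \<longlonglongrightarrow> cdf (density lborel (normal_density 0 s)) x"
    by (simp add: cdf_distr_eq cdf_normal_scaled[OF s] FZ_def \<Phi>_def)
qed




lemma cond_lemma:
  fixes X :: "nat \<Rightarrow> 'w \<Rightarrow> 'a::topological_space" and f :: "'a \<times> 'a \<Rightarrow> real"
    and G :: "(nat \<Rightarrow> 'a) \<Rightarrow> real"
  assumes PM: "prob_space M" and ind: "prob_space.indep_vars M (\<lambda>_. borel) X UNIV"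
    and dX: "\<And>i. distr M borel (X i) = P"
    and A: "finite A" "k \<in> A" "l \<notin> A"
    and Gm[measurable]: "G \<in> borel_measurable (PiM A (\<lambda>_. borel))" and Gb: "\<And>v. \<bar>G v\<bar> \<le> B1"
    and fm[measurable]: "f \<in> borel_measurable (borel \<Otimes>\<^sub>M borel)" and fb: "\<And>z. \<bar>f z\<bar> \<le> B2"
  shows "prob_space.expectation M (\<lambda>w. G (restrict (\<lambda>i. X i w) A) * f (X k w, X l w))
       = prob_space.expectation M (\<lambda>w. G (restrict (\<lambda>i. X i w) A) * (\<integral>y. f (X k w, y) \<partial>P))"
proof -
  interpret prob_space M by (rule PM)
  have Xm[measurable]: "X i \<in> borel_measurable M" for i
    using ind unfolding indep_vars_def by auto
  define V where "V w = restrict (\<lambda>i. X i w) A" for w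
  have Vm[measurable]: "V \<in> measurable M (PiM A (\<lambda>_. borel))"
    unfolding V_def by measurable
  have i1: "indep_var (PiM A (\<lambda>_. borel)) V (PiM {l} (\<lambda>_. borel)) (\<lambda>w. restrict (\<lambda>i. X i w) {l})"
    unfolding V_def by (rule indep_var_restrict[OF ind]) (use A in auto)
  define W where "W w = restrict (\<lambda>i. X i w) {l}" for w
  have Wm[measurable]: "W \<in> measurable M (PiM {l} (\<lambda>_. borel))"
    unfolding W_def by measurable
  have joint: "distr M (PiM A (\<lambda>_. borel)) V \<Otimes>\<^sub>M distr M (PiM {l} (\<lambda>_. borel)) W
       = distr M (PiM A (\<lambda>_. borel) \<Otimes>\<^sub>M PiM {l} (\<lambda>_. borel)) (\<lambda>w. (V w, W w))"
    using i1 unfolding indep_var_distribution_eq W_def by simp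
  interpret DV: prob_space "distr M (PiM A (\<lambda>_. borel)) V" by (rule prob_space_distr) simp
  interpret DW: prob_space "distr M (PiM {l} (\<lambda>_. borel)) W" by (rule prob_space_distr) simp
  interpret DP: prob_space P unfolding dX[of 0, symmetric] by (rule prob_space_distr) simp
  interpret PP: pair_prob_space "distr M (PiM A (\<lambda>_. borel)) V" "distr M (PiM {l} (\<lambda>_. borel)) W" ..
  define F where "F z = G (fst z) * f (fst z k, snd z l)" for z
  have kA: "k \<in> A" by (rule A)
  have Fm[measurable]: "F \<in> borel_measurable (PiM A (\<lambda>_. borel) \<Otimes>\<^sub>M PiM {l} (\<lambda>_. borel))"
    unfolding F_def using kA by measurable
  have Fint: "integrable (distr M (PiM A (\<lambda>_. borel)) V \<Otimes>\<^sub>M distr M (PiM {l} (\<lambda>_. borel)) W) F"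
  proof (rule PP.integrable_const_bound[where B="B1*B2"])
    show "AE x in distr M (PiM A (\<lambda>_. borel)) V \<Otimes>\<^sub>M distr M (PiM {l} (\<lambda>_. borel)) W. norm (F x) \<le> B1 * B2"
      by (auto simp: F_def abs_mult intro!: mult_mono Gb fb order_trans[OF abs_ge_zero Gb])
  qed simp
  have inner: "(\<integral>u. f (v k, u l) \<partial>distr M (PiM {l} (\<lambda>_. borel)) W) = (\<integral>y. f (v k, y) \<partial>P)" for v
  proof -
    have "(\<integral>u. f (v k, u l) \<partial>distr M (PiM {l} (\<lambda>_. borel)) W) = expectation (\<lambda>w. f (v k, W w l))"
      by (rule integral_distr) simp_all
    also have "\<dots> = expectation (\<lambda>w. f (v k, X l w))" by (simp add: W_def)
    also have "\<dots> = (\<integral>y. f (v k, y) \<partial>distr M borel (X l))"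
      by (rule integral_distr[symmetric]) simp_all
    finally show ?thesis by (simp add: dX)
  qed
  have "expectation (\<lambda>w. G (V w) * f (X k w, X l w)) = expectation (\<lambda>w. F (V w, W w))"
    using kA by (simp add: F_def V_def W_def)
  also have "\<dots> = integral\<^sup>L (distr M (PiM A (\<lambda>_. borel) \<Otimes>\<^sub>M PiM {l} (\<lambda>_. borel)) (\<lambda>w. (V w, W w))) F"
    by (rule integral_distr[symmetric]) simp_all
  also have "\<dots> = integral\<^sup>L (distr M (PiM A (\<lambda>_. borel)) V \<Otimes>\<^sub>M distr M (PiM {l} (\<lambda>_. borel)) W) F"
    by (simp add: joint)
  also have "\<dots> = (\<integral>v. (\<integral>u. F (v, u) \<partial>distr M (PiM {l} (\<lambda>_. borel)) W) \<partial>distr M (PiM A (\<lambda>_. borel)) V)"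
    by (rule PP.integral_fst'[OF Fint, symmetric])
  also have "\<dots> = (\<integral>v. G v * (\<integral>y. f (v k, y) \<partial>P) \<partial>distr M (PiM A (\<lambda>_. borel)) V)"
    by (simp add: F_def inner)
  also have "\<dots> = expectation (\<lambda>w. G (V w) * (\<integral>y. f (V w k, y) \<partial>P))"
  proof (rule integral_distr)
    show "(\<lambda>v. G v * (\<integral>y. f (v k, y) \<partial>P)) \<in> borel_measurable (Pi\<^sub>M A (\<lambda>_. borel))"
    proof -
      have sP: "sets P = sets borel" unfolding dX[of 0, symmetric] by simp
      have "(\<lambda>(x, y). f (x k, y)) \<in> borel_measurable (Pi\<^sub>M A (\<lambda>_. borel) \<Otimes>\<^sub>M P)"
        unfolding measurable_cong_sets[OF sets_pair_measure_cong[OF refl sP] refl] using kA by measurable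
      then have "(\<lambda>x. \<integral>y. f (x k, y) \<partial>P) \<in> borel_measurable (Pi\<^sub>M A (\<lambda>_. borel))"
        by (rule DP.borel_measurable_lebesgue_integral[of "\<lambda>x y. f (x k, y)", simplified])
      then show ?thesis by measurable
    qed
  qed simp
  also have "\<dots> = expectation (\<lambda>w. G (V w) * (\<integral>y. f (X k w, y) \<partial>P))"
    using kA by (simp add: V_def)
  finally show ?thesis by (simp add: V_def)
qed




locale ustat =
  fixes M :: "'w measure" and X :: "nat \<Rightarrow> 'w \<Rightarrow> 'a::topological_space"
    and P :: "'a measure" and g :: "'a \<Rightarrow> 'a \<Rightarrow> real"
  assumes PM: "prob_space M" and ind: "prob_space.indep_vars M (\<lambda>_. borel) X UNIV"
    and dX: "\<And>i. distr M borel (X i) = P"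
    and gm: "(\<lambda>z. g (fst z) (snd z)) \<in> borel_measurable (borel \<Otimes>\<^sub>M borel)"
    and g0: "\<And>x y. 0 \<le> g x y" and g1: "\<And>x y. g x y \<le> 1"
begin

sublocale prob_space M by (rule PM)

lemma Xm[measurable]: "X i \<in> borel_measurable M"
  using ind unfolding indep_vars_def by auto

lemma PP: "prob_space P" unfolding dX[of 0, symmetric] by (rule prob_space_distr) simp

lemma sP: "sets P = sets borel" unfolding dX[of 0, symmetric] by simp

lemma g_meas[measurable (raw)]:
  assumes "f \<in> measurable N borel" "f' \<in> measurable N borel"
  shows "(\<lambda>w. g (f w) (f' w)) \<in> borel_measurable N"
proof -
  have "(\<lambda>w. (f w, f' w)) \<in> measurable N (borel \<Otimes>\<^sub>M borel)" using assms by measurable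
  from measurable_compose[OF this gm] show ?thesis by simp
qed

lemma int_meas:
  fixes F :: "'b \<Rightarrow> 'a \<Rightarrow> real"
  assumes "(\<lambda>z. F (fst z) (snd z)) \<in> borel_measurable (N \<Otimes>\<^sub>M borel)"
  shows "(\<lambda>x. \<integral>y. F x y \<partial>P) \<in> borel_measurable N"
proof -
  interpret DP: prob_space P by (rule PP)
  have "case_prod F \<in> borel_measurable (N \<Otimes>\<^sub>M P)"
    unfolding measurable_cong_sets[OF sets_pair_measure_cong[OF refl sP] refl]
    using assms by (simp add: case_prod_beta')
  then show ?thesis by (rule DP.borel_measurable_lebesgue_integral)
qed

lemma intP_bounded:
  fixes f :: "'a \<Rightarrow> real" assumes "f \<in> borel_measurable borel" "\<And>x. \<bar>f x\<bar> \<le> (B::real)"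
  shows "integrable P f"
proof -
  interpret DP: prob_space P by (rule PP)
  show ?thesis
    by (rule DP.integrable_const_bound[where B=B]) (use assms in \<open>auto simp: measurable_cong_sets[OF sP refl]\<close>)
qed

definition h :: "'a \<Rightarrow> 'a \<Rightarrow> real" where "h x y = g x y + g y x"
definition h1 :: "'a \<Rightarrow> real" where "h1 x = (\<integral>y. h x y \<partial>P)"
definition m1 :: real where "m1 = (\<integral>x. h1 x \<partial>P)"
definition psi :: "'a \<Rightarrow> 'a \<Rightarrow> real" where "psi x y = h x y - h1 x - h1 y + m1"

lemma h_meas[measurable (raw)]:
  assumes "f \<in> measurable N borel" "f' \<in> measurable N borel"
  shows "(\<lambda>w. h (f w) (f' w)) \<in> borel_measurable N"
  unfolding h_def using assms by measurable

lemma h_bnd: "0 \<le> h x y" "h x y \<le> 2" "\<bar>h x y\<bar> \<le> 2"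
  using g0[of x y] g1[of x y] g0[of y x] g1[of y x] by (auto simp: h_def)

lemma h_sym: "h x y = h y x" by (simp add: h_def)

lemma h1_meas_base: "h1 \<in> borel_measurable borel"
proof -
  have "(\<lambda>z. h (fst z) (snd z)) \<in> borel_measurable (borel \<Otimes>\<^sub>M borel)" by measurable
  from int_meas[OF this] show ?thesis unfolding h1_def .
qed

lemma h1_meas[measurable (raw)]:
  assumes "f \<in> measurable N borel"
  shows "(\<lambda>w. h1 (f w)) \<in> borel_measurable N"
  using measurable_compose[OF assms h1_meas_base] by simp

lemma h1_bnd: "0 \<le> h1 x" "h1 x \<le> 2" "\<bar>h1 x\<bar> \<le> 2"
proof -
  interpret DP: prob_space P by (rule PP)
  have i: "integrable P (h x)" by (rule intP_bounded[where B=2]) (auto simp: h_bnd)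
  have "0 \<le> h1 x" unfolding h1_def by (rule Bochner_Integration.integral_nonneg) (simp add: h_bnd)
  moreover have "h1 x \<le> (\<integral>y. 2 \<partial>P)" unfolding h1_def
    by (rule integral_mono[OF i]) (auto simp: h_bnd)
  then have "h1 x \<le> 2" by (simp add: DP.prob_space)
  ultimately show "0 \<le> h1 x" "h1 x \<le> 2" "\<bar>h1 x\<bar> \<le> 2" by auto
qed

lemma m1_bnd: "\<bar>m1\<bar> \<le> 2"
proof -
  interpret DP: prob_space P by (rule PP)
  have i: "integrable P h1" by (rule intP_bounded[where B=2]) (auto simp: h1_bnd h1_meas_base)
  have "0 \<le> m1" unfolding m1_def by (rule Bochner_Integration.integral_nonneg) (simp add: h1_bnd)
  moreover have "m1 \<le> (\<integral>y. 2 \<partial>P)" unfolding m1_def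
    by (rule integral_mono[OF i]) (auto simp: h1_bnd)
  then have "m1 \<le> 2" by (simp add: DP.prob_space)
  ultimately show ?thesis by auto
qed

lemma psi_meas[measurable (raw)]:
  assumes "f \<in> measurable N borel" "f' \<in> measurable N borel"
  shows "(\<lambda>w. psi (f w) (f' w)) \<in> borel_measurable N"
  unfolding psi_def using assms by measurable

lemma psi_bnd: "\<bar>psi x y\<bar> \<le> 8"
  using h_bnd[of x y] h1_bnd[of x] h1_bnd[of y] m1_bnd by (auto simp: psi_def)

lemma psi_sym: "psi x y = psi y x" by (simp add: psi_def h_sym)

lemma psi_degen: "(\<integral>y. psi x y \<partial>P) = 0"
proof -
  interpret DP: prob_space P by (rule PP)
  have i1: "integrable P (h x)" by (rule intP_bounded[where B=2]) (auto simp: h_bnd)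
  have i2: "integrable P h1" by (rule intP_bounded[where B=2]) (auto simp: h1_bnd h1_meas_base)
  have "(\<integral>y. psi x y \<partial>P) = (\<integral>y. h x y \<partial>P) - h1 x - (\<integral>y. h1 y \<partial>P) + m1"
    unfolding psi_def using i1 i2 by (simp add: DP.prob_space)
  then show ?thesis by (simp add: h1_def m1_def)
qed

end



context ustat begin

lemma condU:
  fixes G :: "(nat \<Rightarrow> 'a) \<Rightarrow> real" and F :: "'a \<times> 'a \<Rightarrow> real" and Ba Bb :: real
  assumes "finite A" "k \<in> A" "l \<notin> A"
    and "G \<in> borel_measurable (PiM A (\<lambda>_. borel))" "\<And>v. \<bar>G v\<bar> \<le> Ba"
    and "F \<in> borel_measurable (borel \<Otimes>\<^sub>M borel)" "\<And>z. \<bar>F z\<bar> \<le> Bb"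
  shows "expectation (\<lambda>w. G (restrict (\<lambda>i. X i w) A) * F (X k w, X l w))
       = expectation (\<lambda>w. G (restrict (\<lambda>i. X i w) A) * (\<integral>y. F (X k w, y) \<partial>P))"
  by (rule cond_lemma[OF PM ind dX assms])

lemma E_distr:
  fixes f :: "'a \<Rightarrow> real"
  assumes [measurable]: "f \<in> borel_measurable borel"
  shows "expectation (\<lambda>w. f (X i w)) = (\<integral>x. f x \<partial>P)"
proof -
  have "(\<integral>x. f x \<partial>distr M borel (X i)) = expectation (\<lambda>w. f (X i w))"
    by (rule integral_distr) simp_all
  then show ?thesis by (simp add: dX)
qed

lemma hm2[measurable]: "(\<lambda>z. h (fst z) (snd z)) \<in> borel_measurable (borel \<Otimes>\<^sub>M borel)"
  by measurable

lemma E_h: assumes "i \<noteq> j" shows "expectation (\<lambda>w. h (X i w) (X j w)) = m1"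
proof -
  have "expectation (\<lambda>w. (\<lambda>v. 1::real) (restrict (\<lambda>i. X i w) {i}) * (\<lambda>z. h (fst z) (snd z)) (X i w, X j w))
      = expectation (\<lambda>w. (\<lambda>v. 1::real) (restrict (\<lambda>i. X i w) {i}) * (\<integral>y. (\<lambda>z. h (fst z) (snd z)) (X i w, y) \<partial>P))"
    by (rule condU[where A="{i}" and k=i and l=j and G="\<lambda>v. 1" and F="\<lambda>z. h (fst z) (snd z)" and Ba=1 and Bb=2]) (use assms in \<open>auto simp: h_bnd\<close>)
  then have "expectation (\<lambda>w. h (X i w) (X j w)) = expectation (\<lambda>w. h1 (X i w))"
    by (simp add: h1_def)
  also have "\<dots> = m1" unfolding m1_def by (rule E_distr) (rule h1_meas_base)
  finally show ?thesis .
qed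

lemma E_hh: assumes "i \<noteq> j" "i \<noteq> l" "j \<noteq> l"
  shows "expectation (\<lambda>w. h (X i w) (X j w) * h (X i w) (X l w)) = (\<integral>x. (h1 x)\<^sup>2 \<partial>P)"
proof -
  have "expectation (\<lambda>w. (\<lambda>v. h (v i) (v j)) (restrict (\<lambda>i. X i w) {i,j}) * (\<lambda>z. h (fst z) (snd z)) (X i w, X l w))
      = expectation (\<lambda>w. (\<lambda>v. h (v i) (v j)) (restrict (\<lambda>i. X i w) {i,j}) * (\<integral>y. (\<lambda>z. h (fst z) (snd z)) (X i w, y) \<partial>P))"
    by (rule condU[where A="{i,j}" and k=i and l=l and G="\<lambda>v. h (v i) (v j)" and F="\<lambda>z. h (fst z) (snd z)" and Ba=2 and Bb=2]) (use assms in \<open>auto simp: h_bnd\<close>)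
  then have "expectation (\<lambda>w. h (X i w) (X j w) * h (X i w) (X l w)) = expectation (\<lambda>w. h (X i w) (X j w) * h1 (X i w))"
    by (simp add: h1_def)
  also have "\<dots> = expectation (\<lambda>w. (\<lambda>v. h1 (v i)) (restrict (\<lambda>i. X i w) {i}) * (\<lambda>z. h (fst z) (snd z)) (X i w, X j w))"
    by (simp add: mult.commute)
  also have "\<dots> = expectation (\<lambda>w. (\<lambda>v. h1 (v i)) (restrict (\<lambda>i. X i w) {i}) * (\<integral>y. (\<lambda>z. h (fst z) (snd z)) (X i w, y) \<partial>P))"
    by (rule condU[where A="{i}" and k=i and l=j and G="\<lambda>v. h1 (v i)" and F="\<lambda>z. h (fst z) (snd z)" and Ba=2 and Bb=2]) (use assms in \<open>auto simp: h_bnd h1_bnd\<close>)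
  also have "\<dots> = expectation (\<lambda>w. (h1 (X i w))\<^sup>2)"
    by (simp add: h1_def power2_eq_square)
  also have "\<dots> = (\<integral>x. (h1 x)\<^sup>2 \<partial>P)" by (rule E_distr) simp
  finally show ?thesis .
qed

lemma psi_zero:
  assumes "i \<noteq> j" "k \<noteq> l" "\<not> ((k = i \<and> l = j) \<or> (k = j \<and> l = i))"
  shows "expectation (\<lambda>w. psi (X i w) (X j w) * psi (X k w) (X l w)) = 0"
proof -
  have key: "expectation (\<lambda>w. psi (X i w) (X j w) * psi (X a w) (X b w)) = 0"
    if "b \<notin> {i,j,a}" for a b
  proof -
    have "expectation (\<lambda>w. (\<lambda>v. psi (v i) (v j)) (restrict (\<lambda>i. X i w) {i,j,a}) * (\<lambda>z. psi (fst z) (snd z)) (X a w, X b w))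
      = expectation (\<lambda>w. (\<lambda>v. psi (v i) (v j)) (restrict (\<lambda>i. X i w) {i,j,a}) * (\<integral>y. (\<lambda>z. psi (fst z) (snd z)) (X a w, y) \<partial>P))"
      by (rule condU[where A="{i,j,a}" and k=a and l=b and G="\<lambda>v. psi (v i) (v j)" and F="\<lambda>z. psi (fst z) (snd z)" and Ba=8 and Bb=8]) (use that in \<open>auto simp: psi_bnd\<close>)
    then show ?thesis by (simp add: psi_degen)
  qed
  show ?thesis
  proof (cases "l \<in> {i,j}")
    case False
    then show ?thesis using key[of l k] assms by auto
  next
    case True
    then have "k \<notin> {i,j}" using assms by auto
    then show ?thesis using key[of k l] assms by (auto simp: psi_sym[of "X k _"])
  qed
qed

end



lemma (in prob_space) indep_sets_Suc:
  assumes "indep_sets F UNIV" shows "indep_sets (\<lambda>i. F (Suc i)) UNIV"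
  unfolding indep_sets_def
proof (intro conjI ballI allI impI)
  fix i show "F (Suc i) \<subseteq> events" using assms by (auto simp: indep_sets_def)
next
  fix J :: "nat set" and A assume J: "J \<subseteq> UNIV" "J \<noteq> {}" "finite J" and A: "A \<in> Pi J (\<lambda>i. F (Suc i))"
  define A' where "A' j = A (j - 1)" for j
  have "A' \<in> Pi (Suc ` J) F" using A by (auto simp: A'_def)
  then have "prob (\<Inter>j\<in>Suc ` J. A' j) = (\<Prod>j\<in>Suc ` J. prob (A' j))"
    using assms J unfolding indep_sets_def by (metis finite_imageI image_is_empty subset_UNIV)
  moreover have "(\<Inter>j\<in>Suc ` J. A' j) = (\<Inter>j\<in>J. A j)" by (auto simp: A'_def)
  moreover have "(\<Prod>j\<in>Suc ` J. prob (A' j)) = (\<Prod>j\<in>J. prob (A j))"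
    by (subst prod.reindex) (auto simp: A'_def)
  ultimately show "prob (\<Inter>j\<in>J. A j) = (\<Prod>j\<in>J. prob (A j))" by simp
qed

lemma (in prob_space) indep_vars_Suc:
  assumes "indep_vars M' X UNIV" shows "indep_vars (\<lambda>i. M' (Suc i)) (\<lambda>i. X (Suc i)) UNIV"
  using assms unfolding indep_vars_def2 by (auto dest: indep_sets_Suc)

context ustat begin

declare h1_meas_base[measurable]

definition Y :: "nat \<Rightarrow> 'w \<Rightarrow> real" where "Y i w = h1 (X (Suc i) w) - m1"

lemma Ym[measurable]: "Y i \<in> borel_measurable M" unfolding Y_def by measurable

lemma Y_indep: "indep_vars (\<lambda>_. borel) Y UNIV"
proof -
  have "indep_vars (\<lambda>i. borel) (\<lambda>i. X (Suc i)) UNIV"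
    using indep_vars_Suc[OF ind] by simp
  then have "indep_vars (\<lambda>_. borel) (\<lambda>i w. (\<lambda>x. h1 x - m1) (X (Suc i) w)) UNIV"
    by (rule indep_vars_compose2) measurable
  then show ?thesis by (simp add: Y_def[abs_def])
qed

lemma Y_distr: "distr M borel (Y i) = distr P borel (\<lambda>x. h1 x - m1)"
proof -
  have "distr M borel (Y i) = distr M borel ((\<lambda>x. h1 x - m1) \<circ> X (Suc i))"
    by (simp add: Y_def[abs_def] comp_def)
  also have "\<dots> = distr (distr M borel (X (Suc i))) borel (\<lambda>x. h1 x - m1)"
    by (rule distr_distr[symmetric]) measurable
  finally show ?thesis by (simp add: dX)
qed

lemma int_h1: "integrable P h1"
  by (rule intP_bounded[where B=2]) (auto simp: h1_bnd h1_meas_base)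

lemma h1_sq_bnd: "(h1 x)\<^sup>2 \<le> 4"
  using h1_bnd[of x] abs_le_square_iff[of "h1 x" 2] by simp

lemma sq16: "\<bar>t\<bar> \<le> 4 \<Longrightarrow> t\<^sup>2 \<le> (16::real)"
  using abs_le_square_iff[of t 4] by simp

lemma int_h1sq: "integrable P (\<lambda>x. (h1 x)\<^sup>2)"
  by (rule intP_bounded[where B=4]) (auto simp: h1_sq_bnd)

lemma Ysq: "(h1 x - m1)\<^sup>2 \<le> 16"
proof (rule sq16)
  show "\<bar>h1 x - m1\<bar> \<le> 4" using h1_bnd[of x] m1_bnd by linarith
qed

lemma Y_int2: "integrable M (\<lambda>w. (Y i w)\<^sup>2)"
proof (rule integrable_const_bound[where B=16])
  show "AE x in M. norm ((Y i x)\<^sup>2) \<le> 16"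
    using Ysq by (simp add: Y_def)
qed simp

lemma Y_mean: "expectation (Y i) = 0"
proof -
  have "expectation (Y i) = (\<integral>x. h1 x - m1 \<partial>P)"
    unfolding Y_def by (rule E_distr) measurable
  also have "\<dots> = 0"
  proof -
    interpret DP: prob_space P by (rule PP)
    show ?thesis using int_h1 by (simp add: m1_def DP.prob_space)
  qed
  finally show ?thesis .
qed

definition nu0 :: real where "nu0 = (\<integral>x. (h1 x)\<^sup>2 \<partial>P) - m1\<^sup>2"

lemma Y_var: "variance (Y i) = nu0"
proof -
  have "variance (Y i) = expectation (\<lambda>w. (Y i w)\<^sup>2)" by (simp add: Y_mean)
  also have "\<dots> = (\<integral>x. (h1 x - m1)\<^sup>2 \<partial>P)"
    unfolding Y_def by (rule E_distr) measurable
  also have "\<dots> = (\<integral>x. (h1 x)\<^sup>2 - 2 * m1 * h1 x + m1\<^sup>2 \<partial>P)"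
    by (rule Bochner_Integration.integral_cong) (auto simp: power2_diff)
  also have "\<dots> = (\<integral>x. (h1 x)\<^sup>2 \<partial>P) - 2 * m1 * (\<integral>x. h1 x \<partial>P) + m1\<^sup>2"
  proof -
    interpret DP: prob_space P by (rule PP)
    show ?thesis using int_h1 int_h1sq by (simp add: DP.prob_space)
  qed
  also have "\<dots> = nu0" by (simp add: nu0_def m1_def power2_eq_square)
  finally show ?thesis .
qed

lemma clt:
  assumes "nu0 > 0"
  shows "weak_conv_m (\<lambda>n. distr M borel (\<lambda>w. (\<Sum>i<n. Y i w) / sqrt (real n * nu0))) std_normal_distribution"
proof -
  have "weak_conv_m (\<lambda>n. distr M borel (\<lambda>w. (\<Sum>i<n. Y i w) / sqrt (real n * (sqrt nu0)\<^sup>2))) std_normal_distribution"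
    by (rule central_limit_theorem_zero_mean[OF Y_indep Y_mean _ Y_int2 _ Y_distr]) (use assms Y_var in auto)
  then show ?thesis using assms by simp
qed

end



lemma sum_swap_diff:
  assumes "finite I"
  shows "(\<Sum>i\<in>I. \<Sum>j\<in>I-{i}. f i j) = (\<Sum>j\<in>I. \<Sum>i\<in>I-{j}. (f i j :: real))"
proof -
  have e1: "\<And>i. {j\<in>I. i \<noteq> j} = I - {i}" by auto
  have e2: "\<And>j. {i\<in>I. i \<noteq> j} = I - {j}" by auto
  have "(\<Sum>i\<in>I. \<Sum>j\<in>{j\<in>I. i \<noteq> j}. f i j) = (\<Sum>j\<in>I. \<Sum>i\<in>{i\<in>I. i \<noteq> j}. f i j)"
    by (rule sum.swap_restrict) (use assms in auto)
  then show ?thesis by (simp only: e1 e2)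
qed

lemma sum_const_inner:
  assumes "finite I"
  shows "(\<Sum>i\<in>I. \<Sum>j\<in>I-{i}. (b i :: real)) = (real (card I) - 1) * (\<Sum>i\<in>I. b i)"
proof -
  have "(\<Sum>i\<in>I. \<Sum>j\<in>I-{i}. b i) = (\<Sum>i\<in>I. (real (card I) - 1) * b i)"
  proof (rule sum.cong[OF refl])
    fix i assume "i \<in> I"
    then have "card (I - {i}) = card I - 1" by (simp add: assms)
    moreover have "card I \<ge> 1" using \<open>i \<in> I\<close> assms by (metis card_0_eq empty_iff less_one not_le)
    ultimately show "(\<Sum>j\<in>I-{i}. b i) = (real (card I) - 1) * b i" by (simp add: of_nat_diff)
  qed
  then show ?thesis by (simp add: sum_distrib_left)
qed

lemma psi_sum_identity:
  assumes "finite I"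
  shows "(\<Sum>i\<in>I. \<Sum>j\<in>I-{i}. (a i j + a j i) - b i - b j + (c::real))
     = 2 * (\<Sum>i\<in>I. \<Sum>j\<in>I-{i}. a i j) - 2 * (real (card I) - 1) * (\<Sum>i\<in>I. b i)
       + real (card I) * (real (card I) - 1) * c"
proof -
  have s1: "(\<Sum>i\<in>I. \<Sum>j\<in>I-{i}. a j i) = (\<Sum>i\<in>I. \<Sum>j\<in>I-{i}. a i j)"
    using sum_swap_diff[OF assms, of "\<lambda>i j. a j i"] by simp
  have s2: "(\<Sum>i\<in>I. \<Sum>j\<in>I-{i}. b j) = (\<Sum>i\<in>I. \<Sum>j\<in>I-{i}. b i)"
    using sum_swap_diff[OF assms, of "\<lambda>i j. b j"] by simp
  have "(\<Sum>i\<in>I. \<Sum>j\<in>I-{i}. (a i j + a j i) - b i - b j + c)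
     = (\<Sum>i\<in>I. \<Sum>j\<in>I-{i}. a i j) + (\<Sum>i\<in>I. \<Sum>j\<in>I-{i}. a j i) - (\<Sum>i\<in>I. \<Sum>j\<in>I-{i}. b i)
       - (\<Sum>i\<in>I. \<Sum>j\<in>I-{i}. b j) + (\<Sum>i\<in>I. \<Sum>j\<in>I-{i}. c)"
    by (simp add: sum.distrib sum_subtractf)
  also have "\<dots> = 2 * (\<Sum>i\<in>I. \<Sum>j\<in>I-{i}. a i j) - 2 * (real (card I) - 1) * (\<Sum>i\<in>I. b i)
       + real (card I) * (real (card I) - 1) * c"
    unfolding s1 s2 sum_const_inner[OF assms] sum_const_inner[OF assms, of "\<lambda>_. c"]
    by (simp add: algebra_simps)
  finally show ?thesis .
qed

context ustat begin

definition U :: "nat \<Rightarrow> 'w \<Rightarrow> real" where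
  "U n w = (\<Sum>i\<in>{1..n}. \<Sum>j\<in>{1..n} - {i}. g (X i w) (X j w)) / (real n * (real n - 1))"

definition D :: "nat \<Rightarrow> 'w \<Rightarrow> real" where
  "D n w = (\<Sum>i\<in>{1..n}. \<Sum>j\<in>{1..n} - {i}. psi (X i w) (X j w))"

definition R :: "nat \<Rightarrow> 'w \<Rightarrow> real" where
  "R n w = sqrt (real n) / (2 * real n * (real n - 1)) * D n w"

lemma sumY: "(\<Sum>i<n. Y i w) = (\<Sum>i\<in>{1..n}. h1 (X i w)) - real n * m1"
proof -
  have "{1..n} = Suc ` {..<n}"
  proof (auto simp: image_iff)
    fix x assume "Suc 0 \<le> x" "x \<le> n"
    then show "\<exists>y\<in>{..<n}. x = Suc y" by (intro bexI[of _ "x - 1"]) auto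
  qed
  then have "(\<Sum>i\<in>{1..n}. h1 (X i w)) = (\<Sum>i<n. h1 (X (Suc i) w))"
    by (simp add: sum.reindex)
  then show ?thesis by (simp add: Y_def sum_subtractf)
qed

lemma decomp:
  assumes n: "n \<ge> 2" and nu: "nu0 > 0"
  shows "sqrt (real n) * (U n w - m1 / 2) = sqrt nu0 * ((\<Sum>i<n. Y i w) / sqrt (real n * nu0)) + R n w"
proof -
  define G where "G = (\<Sum>i\<in>{1..n}. \<Sum>j\<in>{1..n} - {i}. g (X i w) (X j w))"
  define H where "H = (\<Sum>i\<in>{1..n}. h1 (X i w))"
  have D: "D n w = 2 * G - 2 * (real n - 1) * H + real n * (real n - 1) * m1"
    unfolding D_def psi_def h_def G_def H_def
    using psi_sum_identity[of "{1..n}" "\<lambda>i j. g (X i w) (X j w)" "\<lambda>i. h1 (X i w)" m1] by simp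
  have sn: "sqrt (real n) > 0" using n by simp
  have nn: "real n - 1 > 0" using n by simp
  have "sqrt nu0 * ((\<Sum>i<n. Y i w) / sqrt (real n * nu0)) = (H - real n * m1) / sqrt (real n)"
    using nu by (simp add: sumY H_def real_sqrt_mult)
  moreover have "sqrt (real n) * (U n w - m1 / 2) = (H - real n * m1) / sqrt (real n) + R n w"
  proof -
    have sq: "sqrt (real n) * sqrt (real n) = real n" using n by simp
    have nz: "real n \<noteq> 0" using n by simp
    have b: "G / (real n * (real n - 1)) - m1 / 2 = (H - real n * m1) / real n
        + (2 * G - 2 * (real n - 1) * H + real n * (real n - 1) * m1) / (2 * real n * (real n - 1))"
      using nn nz by (simp add: field_simps)
    have c: "(H - real n * m1) / sqrt (real n) = sqrt (real n) * ((H - real n * m1) / real n)"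
      using sn sq by (simp add: field_simps)
    show ?thesis unfolding R_def D U_def G_def[symmetric] c
      by (simp only: b distrib_left times_divide_eq_right times_divide_eq_left add_divide_distrib add.assoc)
  qed
  ultimately show ?thesis by simp
qed

end



context ustat begin

definition Qs :: "nat \<Rightarrow> (nat \<times> nat) set" where "Qs n = Sigma {1..n} (\<lambda>i. {1..n} - {i})"

definition ps :: "nat \<times> nat \<Rightarrow> 'w \<Rightarrow> real" where "ps q w = psi (X (fst q) w) (X (snd q) w)"

lemma ps_meas[measurable]: "ps q \<in> borel_measurable M" unfolding ps_def by measurable

lemma Qs_fin: "finite (Qs n)" unfolding Qs_def by auto

lemma D_Qs: "D n w = (\<Sum>q\<in>Qs n. ps q w)"
  unfolding D_def Qs_def ps_def by (subst sum.Sigma) (auto simp: case_prod_beta')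

lemma psps_bnd: "\<bar>ps q w * ps q' w\<bar> \<le> 64"
proof -
  have "\<bar>ps q w * ps q' w\<bar> = \<bar>ps q w\<bar> * \<bar>ps q' w\<bar>" by (simp add: abs_mult)
  also have "\<dots> \<le> 8 * 8" unfolding ps_def by (intro mult_mono psi_bnd) auto
  finally show ?thesis by simp
qed

lemma psps_int: "integrable M (\<lambda>w. ps q w * ps q' w)"
  by (rule integrable_const_bound[where B=64]) (auto simp: psps_bnd)

lemma e_bnd: "expectation (\<lambda>w. ps q w * ps q' w) \<le> 64"
proof -
  have "expectation (\<lambda>w. ps q w * ps q' w) \<le> expectation (\<lambda>w. 64)"
    by (rule integral_mono[OF psps_int]) (auto intro: order_trans[OF abs_ge_self psps_bnd])
  then show ?thesis by (simp add: prob_space)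
qed

lemma card_Qs: "real (card (Qs n)) = real n * (real n - 1)"
proof (cases "n = 0")
  case True then show ?thesis by (simp add: Qs_def)
next
  case False
  have "card (Qs n) = (\<Sum>i\<in>{1..n}. card ({1..n} - {i}))" unfolding Qs_def by simp
  also have "\<dots> = (\<Sum>i\<in>{1..n}. n - 1)" by (rule sum.cong) auto
  also have "\<dots> = n * (n - 1)" by simp
  finally show ?thesis using False by (simp add: of_nat_diff)
qed

lemma D2_eq: "(D n w)\<^sup>2 = (\<Sum>q\<in>Qs n. \<Sum>q'\<in>Qs n. ps q w * ps q' w)"
  unfolding D_Qs power2_eq_square by (simp add: sum_product)

lemma D2_int: "integrable M (\<lambda>w. (D n w)\<^sup>2)"
  unfolding D2_eq by (intro Bochner_Integration.integrable_sum psps_int)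

lemma row_bnd:
  assumes q: "q \<in> Qs n"
  shows "(\<Sum>q'\<in>Qs n. expectation (\<lambda>w. ps q w * ps q' w)) \<le> 128"
proof -
  obtain i j where qij: "q = (i, j)" by (cases q)
  have ij: "i \<in> {1..n}" "j \<in> {1..n}" "i \<noteq> j" using q by (auto simp: Qs_def qij)
  define S where "S = {(i,j),(j,i)}"
  have SQ: "S \<subseteq> Qs n" using ij by (auto simp: S_def Qs_def)
  have "(\<Sum>q'\<in>Qs n. expectation (\<lambda>w. ps q w * ps q' w)) = (\<Sum>q'\<in>S. expectation (\<lambda>w. ps q w * ps q' w))"
  proof (rule sum.mono_neutral_right[OF Qs_fin SQ])
    show "\<forall>q'\<in>Qs n - S. expectation (\<lambda>w. ps q w * ps q' w) = 0"
    proof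
      fix q' assume q': "q' \<in> Qs n - S"
      obtain k l where kl: "q' = (k, l)" by (cases q')
      have kl1: "k \<noteq> l" and kl2: "\<not> ((k = i \<and> l = j) \<or> (k = j \<and> l = i))" using q' by (auto simp: kl Qs_def S_def)
      have "expectation (\<lambda>w. psi (X i w) (X j w) * psi (X k w) (X l w)) = 0"
        by (rule psi_zero[OF ij(3) kl1 kl2])
      then show "expectation (\<lambda>w. ps q w * ps q' w) = 0"
        by (simp only: ps_def qij kl fst_conv snd_conv)
    qed
  qed
  also have "\<dots> \<le> (\<Sum>q'\<in>S. 64)" by (rule sum_mono) (rule e_bnd)
  also have "\<dots> \<le> 128"
  proof -
    have "card S \<le> 2" unfolding S_def using ij(3) by simp
    then show ?thesis by simp
  qed
  finally show ?thesis .
qed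

lemma ED2: "expectation (\<lambda>w. (D n w)\<^sup>2) \<le> 128 * (real n * (real n - 1))"
proof -
  have "expectation (\<lambda>w. (D n w)\<^sup>2) = (\<Sum>q\<in>Qs n. \<Sum>q'\<in>Qs n. expectation (\<lambda>w. ps q w * ps q' w))"
    unfolding D2_eq by (simp add: Bochner_Integration.integral_sum Bochner_Integration.integrable_sum psps_int)
  also have "\<dots> \<le> (\<Sum>q\<in>Qs n. 128)" by (rule sum_mono) (rule row_bnd)
  also have "\<dots> = 128 * (real n * (real n - 1))" using card_Qs[of n] by simp
  finally show ?thesis .
qed

lemma R_meas[measurable]: "R n \<in> borel_measurable M"
  unfolding R_def D_Qs by measurable

lemma ER2:
  assumes n: "n \<ge> 2"
  shows "expectation (\<lambda>w. (R n w)\<^sup>2) \<le> 32 / (real n - 1)"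
proof -
  define c where "c = sqrt (real n) / (2 * real n * (real n - 1))"
  have c2: "c\<^sup>2 = 1 / (4 * real n * (real n - 1)\<^sup>2)"
  proof -
    have np: "real n > 0" "real n - 1 > 0" using n by auto
    have "c\<^sup>2 = real n / (2 * real n * (real n - 1))\<^sup>2"
      unfolding c_def power_divide using np by simp
    also have "\<dots> = 1 / (4 * real n * (real n - 1)\<^sup>2)"
      using np by (simp add: power2_eq_square)
    finally show ?thesis .
  qed
  have "expectation (\<lambda>w. (R n w)\<^sup>2) = c\<^sup>2 * expectation (\<lambda>w. (D n w)\<^sup>2)"
    by (simp add: R_def c_def[symmetric] power_mult_distrib)
  also have "\<dots> \<le> c\<^sup>2 * (128 * (real n * (real n - 1)))"
    by (rule mult_left_mono[OF ED2]) simp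
  also have "\<dots> = 32 / (real n - 1)"
  proof -
    have np: "real n > 0" "real n - 1 > 0" using n by auto
    have gen: "1 / (4 * a * t\<^sup>2) * (128 * (a * t)) = 32 / t" if "a > 0" "t > 0" for a t :: real
      using that by (simp add: power2_eq_square field_simps)
    show ?thesis unfolding c2 using gen[OF np] .
  qed
  finally show ?thesis .
qed

lemma R_int2: "integrable M (\<lambda>w. (R n w)\<^sup>2)"
  unfolding R_def power_mult_distrib by (intro integrable_mult_right D2_int)

lemma R_prob:
  assumes d: "d > 0"
  shows "(\<lambda>n. prob {w\<in>space M. d \<le> \<bar>R n w\<bar>}) \<longlonglongrightarrow> 0"
proof (rule tendsto_sandwich[where f="\<lambda>_. 0" and h="\<lambda>n. 32 / (real n - 1) / d\<^sup>2"])
  show "eventually (\<lambda>n. 0 \<le> prob {w\<in>space M. d \<le> \<bar>R n w\<bar>}) sequentially" by simp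
  show "eventually (\<lambda>n. prob {w\<in>space M. d \<le> \<bar>R n w\<bar>} \<le> 32 / (real n - 1) / d\<^sup>2) sequentially"
    using eventually_ge_at_top[of 2]
  proof eventually_elim
    case (elim n)
    have "prob {w\<in>space M. d \<le> \<bar>R n w\<bar>} \<le> expectation (\<lambda>w. (R n w)^2) / d\<^sup>2"
      by (rule second_moment_method[OF R_meas R_int2 d])
    also have "\<dots> \<le> 32 / (real n - 1) / d\<^sup>2"
      by (rule divide_right_mono[OF ER2[OF elim]]) simp
    finally show ?case .
  qed
  have "(\<lambda>n. 32 / d\<^sup>2 / real n) \<longlonglongrightarrow> 0" by (rule lim_const_over_n)
  then have "(\<lambda>n. 32 / (real (Suc n) - 1) / d\<^sup>2) \<longlonglongrightarrow> 0" by (simp add: field_simps)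
  then show "(\<lambda>n. 32 / (real n - 1) / d\<^sup>2) \<longlonglongrightarrow> 0" by (rule LIMSEQ_imp_Suc)
qed simp

end



context ustat begin

lemma U_meas[measurable]: "U n \<in> borel_measurable M"
  unfolding U_def by measurable

lemma covar_nu0: "covar M (\<lambda>w. h (X 1 w) (X 2 w)) (\<lambda>w. h (X 1 w) (X 3 w)) = nu0"
  unfolding covar_def nu0_def using E_hh[of 1 2 3] E_h[of 1 2] E_h[of 1 3]
  by (simp add: power2_eq_square)

theorem ustat_clt:
  assumes nu: "covar M (\<lambda>w. h (X 1 w) (X 2 w)) (\<lambda>w. h (X 1 w) (X 3 w)) > 0"
  shows "weak_conv_m (\<lambda>n. distr M borel (\<lambda>w. sqrt (real n) * (U n w - expectation (\<lambda>w. h (X 1 w) (X 2 w)) / 2)))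
           (density lborel (normal_density 0 (sqrt (covar M (\<lambda>w. h (X 1 w) (X 2 w)) (\<lambda>w. h (X 1 w) (X 3 w))))))"
proof -
  have nu0: "nu0 > 0" using nu covar_nu0 by simp
  have "weak_conv_m (\<lambda>n. distr M borel (\<lambda>w. sqrt (real n) * (U n w - m1 / 2))) (density lborel (normal_density 0 (sqrt nu0)))"
  proof (rule slutsky[OF PM _ _ R_meas _ clt[OF nu0] R_prob decomp[OF _ nu0]])
    show "0 < sqrt nu0" using nu0 by simp
  qed measurable
  then show ?thesis using covar_nu0 E_h[of 1 2] by simp
qed

end



lemma closed_Tri: "closed Tri"
  unfolding Tri_def Yset_def by (intro compact_imp_closed compact_convex_hull finite_imp_compact) simp

lemma closed_vregion: "closed (vregion j)"
  unfolding vregion_def by (intro compact_imp_closed compact_convex_hull finite_imp_compact) simp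

lemma Tri_ne: "Tri \<noteq> {}"
  unfolding Tri_def Yset_def by simp

lemma sets_Tri[measurable]: "Tri \<in> sets borel" by (rule borel_closed[OF closed_Tri])
lemma sets_vregion[measurable]: "vregion j \<in> sets borel" by (rule borel_closed[OF closed_vregion])
lemma sets_Yset[measurable]: "Yset \<in> sets borel"
  by (rule borel_closed) (simp add: Yset_def finite_imp_closed)

lemma infdist_translate:
  fixes v x :: "'a::real_normed_vector"
  assumes "L \<noteq> {}"
  shows "infdist v ((\<lambda>z. x + z) ` L) = infdist (v - x) L"
proof -
  have "infdist v ((\<lambda>z. x + z) ` L) = (INF a\<in>(\<lambda>z. x + z) ` L. dist v a)"
    using assms by (simp add: infdist_notempty)
  also have "\<dots> = (INF z\<in>L. dist v (x + z))" by (simp add: image_image)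
  also have "\<dots> = (INF z\<in>L. dist (v - x) z)"
    by (rule INF_cong[OF refl]) (simp add: dist_norm algebra_simps)
  also have "\<dots> = infdist (v - x) L" using assms by (simp add: infdist_notempty)
  finally show ?thesis .
qed

lemma dvl_eq: "dvl j x = infdist (vert j - x) (range (\<lambda>t. t *\<^sub>R (vert (j+2) - vert (j+1))))"
proof -
  have "pline j x = (\<lambda>z. x + z) ` range (\<lambda>t. t *\<^sub>R (vert (j+2) - vert (j+1)))"
    unfolding pline_def by auto
  then show ?thesis unfolding dvl_def by (simp add: infdist_translate)
qed

lemma dvl_meas[measurable]: "dvl j \<in> borel_measurable borel"
proof -
  have "continuous_on UNIV (\<lambda>x. infdist (vert j - x) (range (\<lambda>t. t *\<^sub>R (vert (j+2) - vert (j+1)))))"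
    by (intro continuous_intros)
  then show ?thesis unfolding dvl_eq[abs_def] by (rule borel_measurable_continuous_onI)
qed

lemma diag_pred[measurable]:
  "Measurable.pred (borel \<Otimes>\<^sub>M borel) (\<lambda>z::(real\<times>real)\<times>(real\<times>real). fst z = snd z)"
proof -
  have "closed {z::(real\<times>real)\<times>(real\<times>real). fst z = snd z}"
    by (intro closed_Collect_eq continuous_intros)
  then have "{z::(real\<times>real)\<times>(real\<times>real). fst z = snd z} \<in> sets (borel \<Otimes>\<^sub>M borel)"
    unfolding borel_prod by (rule borel_closed)
  then show ?thesis by (simp add: pred_def)
qed

lemma image_indicator_meas:
  fixes lam :: "'b \<Rightarrow> real" and v :: "real \<times> real"
  assumes lm[measurable]: "lam \<in> borel_measurable N" and T: "closed T" "T \<noteq> {}"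
  shows "(\<lambda>z. indicator ((\<lambda>u. v + lam (fst z) *\<^sub>R (u - v)) ` T) (snd z) :: real) \<in> borel_measurable (N \<Otimes>\<^sub>M borel)"
proof -
  have Ts[measurable]: "T \<in> sets borel" by (rule borel_closed[OF T(1)])
  have eq: "indicator ((\<lambda>u. v + l *\<^sub>R (u - v)) ` T) y =
      (if l = 0 then indicator {v} y else indicator T (v + (1 / l) *\<^sub>R (y - v)) :: real)" for l y
  proof (cases "l = 0")
    case True
    then have "(\<lambda>u. v + l *\<^sub>R (u - v)) ` T = {v}" using T(2) by auto
    then show ?thesis using True by simp
  next
    case False
    have "y \<in> (\<lambda>u. v + l *\<^sub>R (u - v)) ` T \<longleftrightarrow> v + (1 / l) *\<^sub>R (y - v) \<in> T"
    proof
      assume "y \<in> (\<lambda>u. v + l *\<^sub>R (u - v)) ` T"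
      then obtain u where "u \<in> T" "y = v + l *\<^sub>R (u - v)" by auto
      then show "v + (1 / l) *\<^sub>R (y - v) \<in> T" using False by simp
    next
      assume "v + (1 / l) *\<^sub>R (y - v) \<in> T"
      moreover have "y = v + l *\<^sub>R ((v + (1 / l) *\<^sub>R (y - v)) - v)" using False by simp
      ultimately show "y \<in> (\<lambda>u. v + l *\<^sub>R (u - v)) ` T" by blast
    qed
    then show ?thesis using False by (simp add: indicator_def)
  qed
  show ?thesis unfolding eq by measurable
qed




lemma vert_cong: "a mod 3 = b mod 3 \<Longrightarrow> vert a = vert b"
  unfolding vert_def by simp

lemma vregion_mod: "vregion j = vregion (j mod 3)"
proof -
  have "vert j = vert (j mod 3)" "vert (j+1) = vert (j mod 3 + 1)" "vert (j+2) = vert (j mod 3 + 2)"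
    by (rule vert_cong; simp add: mod_simps)+
  then show ?thesis unfolding vregion_def by simp
qed

lemma vidx_eq: "vidx x = (if x \<in> vregion 0 then 0 else if x \<in> vregion 1 then 1
                          else if x \<in> vregion 2 then 2 else (LEAST j::nat. False))"
proof -
  have m3: "j mod 3 = 0 \<or> j mod 3 = 1 \<or> j mod 3 = 2" for j :: nat by auto
  show ?thesis
  proof (cases "x \<in> vregion 0")
    case True then show ?thesis unfolding vidx_def by (simp add: Least_eq_0)
  next
    case F0: False
    show ?thesis
    proof (cases "x \<in> vregion 1")
      case True
      have "(LEAST j. x \<in> vregion j) = 1"
      proof (rule Least_equality)
        show "x \<in> vregion 1" by fact
        fix y assume "x \<in> vregion y"
        then show "1 \<le> y" using F0 by (cases y) auto
      qed
      then show ?thesis using True F0 unfolding vidx_def by simp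
    next
      case F1: False
      show ?thesis
      proof (cases "x \<in> vregion 2")
        case True
        have "(LEAST j. x \<in> vregion j) = 2"
        proof (rule Least_equality)
          show "x \<in> vregion 2" by fact
          fix y assume "x \<in> vregion y"
          then show "2 \<le> y" using F0 F1 by (cases y; cases "y - 1"; auto)
        qed
        then show ?thesis using True F0 F1 unfolding vidx_def by simp
      next
        case F2: False
        have "x \<notin> vregion j" for j
          using F0 F1 F2 m3[of j] vregion_mod[of j] by auto
        then show ?thesis using F0 F1 F2 unfolding vidx_def by simp
      qed
    qed
  qed
qed

definition lamj :: "real \<Rightarrow> nat \<Rightarrow> real \<times> real \<Rightarrow> real" where
  "lamj rr j x = rr * dvl j x / infdist (vert j) (pline j (vert (j+1)))"

definition TRj :: "real \<Rightarrow> nat \<Rightarrow> real \<times> real \<Rightarrow> (real \<times> real) set" where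
  "TRj rr j x = (\<lambda>z. vert j + lamj rr j x *\<^sub>R (z - vert j)) ` Tri"

lemma Tr_eq: "Tr rr x = TRj rr (vidx x) x"
  unfolding Tr_def TRj_def lamj_def Let_def ..

lemma TRj_meas[measurable]:
  "(\<lambda>z. indicator (TRj rr j (fst z)) (snd z) :: real) \<in> borel_measurable (borel \<Otimes>\<^sub>M borel)"
proof -
  have "lamj rr j \<in> borel_measurable borel" unfolding lamj_def[abs_def] by measurable
  from image_indicator_meas[OF this closed_Tri Tri_ne, of "vert j"] show ?thesis
    unfolding TRj_def by simp
qed

lemma NY_meas:
  "(\<lambda>z. indicator (NY r (fst z)) (snd z) :: real) \<in> borel_measurable (borel \<Otimes>\<^sub>M borel)"
proof -
  define c where "c = (LEAST j::nat. False)"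
  have eq: "indicator (NY r x) y =
     (if x \<in> Yset then (if x = y then 1 else 0) else if r = \<infinity> then indicator Tri y
      else (if x \<in> vregion 0 then indicator (TRj (real_of_ereal r) 0 x) y
            else if x \<in> vregion 1 then indicator (TRj (real_of_ereal r) 1 x) y
            else if x \<in> vregion 2 then indicator (TRj (real_of_ereal r) 2 x) y
            else indicator (TRj (real_of_ereal r) c x) y) * indicator Tri y :: real)" for x y
    unfolding NY_def Tr_eq vidx_eq[of x] c_def[symmetric]
    by (auto simp: indicator_def)
  show ?thesis unfolding eq by measurable
qed


theorem theorem3:
  fixes r :: ereal and eps :: real
  assumes "1 \<le> r" and "0 \<le> eps" and "eps < sqrt 3 / 3"
  shows "(\<forall>(M :: 'w measure) X. iid_seq M X (HS eps) \<and> nu M X r > 0 \<longrightarrow>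
            weak_conv_m (\<lambda>n. distr M borel (\<lambda>w. sqrt (real n) * (rho r n (\<lambda>i. X i w) - mu M X r)))
                        (density lborel (normal_density 0 (sqrt (nu M X r)))))
       \<and> (\<forall>(M :: 'w measure) X. iid_seq M X (HA eps) \<and> nu M X r > 0 \<longrightarrow>
            weak_conv_m (\<lambda>n. distr M borel (\<lambda>w. sqrt (real n) * (rho r n (\<lambda>i. X i w) - mu M X r)))
                        (density lborel (normal_density 0 (sqrt (nu M X r)))))"
proof -
  have main: "weak_conv_m (\<lambda>n. distr M borel (\<lambda>w. sqrt (real n) * (rho r n (\<lambda>i. X i w) - mu M X r)))
                        (density lborel (normal_density 0 (sqrt (nu M X r))))"
    if iid: "iid_seq M X P" and nupos: "nu M X r > 0" for M :: "'w measure" and X P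
  proof -
    have pm: "prob_space M" and ind: "prob_space.indep_vars M (\<lambda>_. borel) X UNIV"
      and dX: "\<And>i. distr M borel (X i) = P"
      using iid unfolding iid_seq_def by auto
    interpret U: ustat M X P "\<lambda>x y. indicator (NY r x) y"
      by (rule ustat.intro[OF pm ind dX NY_meas]) (auto simp: indicator_def)
    have hk: "hker r = U.h" unfolding hker_def[abs_def] U.h_def[abs_def] ..
    have rho: "rho r n (\<lambda>i. X i w) = U.U n w" for n w unfolding rho_def U.U_def ..
    have mu: "mu M X r = U.expectation (\<lambda>w. U.h (X 1 w) (X 2 w)) / 2" unfolding mu_def hk ..
    have nu: "nu M X r = covar M (\<lambda>w. U.h (X 1 w) (X 2 w)) (\<lambda>w. U.h (X 1 w) (X 3 w))"
      unfolding nu_def hk ..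
    show ?thesis unfolding rho mu nu
      by (rule U.ustat_clt) (use nupos nu in \<open>simp only:\<close>)
  qed
  show ?thesis using main by blast
qed

end
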